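(* In the setting described in the context, let $\epsilon\in\{\pm1\}$ be the sign of $a(\tilde\alpha_0h')$ and $l=|a(\tilde\alpha_0h')|/t$. Then for every $0\le j\le r$ there is an integer $m_j\in\mathbb Z$ such that $\epsilon l\alpha_j=\tilde\alpha_jh'+m_jh'$.
   Context: Let $\mathbb K$ be a number field of degree $d=r+2\ge2$ with exactly one pair of complex conjugate embeddings; order its embeddings $\sigma_1,\dots,\sigma_r$ (real), $\sigma_{\mathbb C}$, $\overline{\sigma_{\mathbb C}}$. A $\mathbb Q$-basis $(e_0,\dots,e_{r+1})$ of $\mathbb K$ is positive if $i\cdot\det(\sigma_j(e_{k-1}))_{1\le j,k\le d}>0$. Let $\mathfrak f\ne\mathcal O_{\mathbb K}$ be an integral ideal, $q\mathbb Z=\mathfrak f\cap\mathbb Z$, $\mathfrak b$ an integral ideal coprime to $\mathfrak f$, $L=\mathfrak f\mathfrak b^{-1}$, $\mathfrak a$ an integral ideal coprime to $\mathfrak f\mathfrak b$ with $\mathfrak a^{-1}L/L$ cyclic, $N=\mathcal N(\mathfrak a)$. An element $h\in L$ is admissible if $h/q-1\in L$ and $h/N$ generates $\mathfrak a^{-1}L/L$. Let $\mathcal O^{+,\times}_{\mathfrak f}$ be the group of units $\equiv1\bmod\mathfrak f$ positive at all real embeddings. Let $u_1,\dots,u_r\in\mathcal O^{+,\times}_{\mathfrak f}$ with $1,u_1,\dots,u_r$ linearly independent over $\mathbb Q$, $u_0=1$. For $h$: $h\in L$ admissible, $h=mh'$, $m\in\mathbb Z_{>0}$, $h'$ primitive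 in $L$. Fix a positive $\mathbb Z$-basis $(e_0=h',e_1,\dots,e_{r+1})$ of $L$ with $u_jh'=\sum_{k=0}^jc_{jk0}e_k$, $c_{jk0}\in\mathbb Z$, $c_{jj0}>0$; $\lambda=\prod_jc_{jj0}$; $a:L\to\mathbb Z$ with $\lambda a=\det(h',u_1h',\dots,u_rh',\cdot)$ in this basis; $au_j:y\mapsto a(u_jy)$; $\mathcal A=(au_j(e_k))_{0\le j\le r,1\le k\le r+1}$, elementary divisors $1=A_0\mid\dots\mid A_r$, $t=A_r$; $\alpha_j=\sum_{i=1}^{r+1}b_{ij}e_i$ with $(b_{ij})=t\mathcal A^{-1}$, so $au_k(\alpha_j)=t\delta_{jk}$. For $1$: fix a positive $\mathbb Z$-basis $(1,\tilde e_1,\dots,\tilde e_{r+1})$ of $\mathcal O_{\mathbb K}$ with $u_j=\sum_{k=0}^j\tilde c_{jk0}\tilde e_k$ ($\tilde e_0=1$), $\tilde c_{jj0}>0$; $\tilde\lambda=\prod_j\tilde c_{jj0}$; $\tilde a$ with $\tilde\lambda\tilde a=\det(1,u_1,\dots,u_r,\cdot)$; $\tilde{\mathcal A}=(\tilde au_j(\tilde e_k))$, elementary divisors $1=\tilde A_0\mid\dots\mid\tilde A_r$, $\tilde t=\tilde A_r$; $\tilde\alpha_j=\sum_{i=1}^{r+1}\tilde b_{ij}\tilde e_i$ with $(\tilde b_{ij})=\tilde t\tilde{\mathcal A}^{-1}$. *)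

theory Defs
  imports "HOL-Analysis.Analysis" "HOL-Computational_Algebra.Polynomial"
begin

text \<open>The number field K is modelled as a type 'k of class field_char_0;
  it is Q-vector space via of_rat. Finite families are functions nat => _,
  only indices below the stated length matter.\<close>

definition detn :: "nat \<Rightarrow> (nat \<Rightarrow> nat \<Rightarrow> 'a::comm_ring_1) \<Rightarrow> 'a" where
  "detn n M = (\<Sum>p | p permutes {..<n}. of_int (sign p) * (\<Prod>i<n. M i (p i)))"

definition is_Q_basis :: "nat \<Rightarrow> (nat \<Rightarrow> 'k::field_char_0) \<Rightarrow> bool" where
  "is_Q_basis n e \<longleftrightarrow>
     (\<forall>x. \<exists>!c::nat\<Rightarrow>rat. (\<forall>k\<ge>n. c k = 0) \<and> x = (\<Sum>k<n. of_rat (c k) * e k))"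

definition Q_lin_indep :: "nat \<Rightarrow> (nat \<Rightarrow> 'k::field_char_0) \<Rightarrow> bool" where
  "Q_lin_indep n v \<longleftrightarrow>
     (\<forall>c::nat\<Rightarrow>rat. (\<Sum>k<n. of_rat (c k) * v k) = 0 \<longrightarrow> (\<forall>k<n. c k = 0))"

definition is_Z_basis :: "nat \<Rightarrow> 'k::field_char_0 set \<Rightarrow> (nat \<Rightarrow> 'k) \<Rightarrow> bool" where
  "is_Z_basis n L e \<longleftrightarrow>
     (\<forall>x. x \<in> L \<longleftrightarrow> (\<exists>c::nat\<Rightarrow>int. x = (\<Sum>k<n. of_int (c k) * e k))) \<and>
     (\<forall>c::nat\<Rightarrow>int. (\<Sum>k<n. of_int (c k) * e k) = 0 \<longrightarrow> (\<forall>k<n. c k = 0))"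

definition zcoord :: "nat \<Rightarrow> (nat \<Rightarrow> 'k::field_char_0) \<Rightarrow> 'k \<Rightarrow> nat \<Rightarrow> int" where
  "zcoord n e x = (THE c. (\<forall>k\<ge>n. c k = 0) \<and> x = (\<Sum>k<n. of_int (c k) * e k))"

definition embedding :: "('k::field_char_0 \<Rightarrow> complex) \<Rightarrow> bool" where
  "embedding \<tau> \<longleftrightarrow> \<tau> 1 = 1 \<and> (\<forall>x y. \<tau> (x + y) = \<tau> x + \<tau> y) \<and> (\<forall>x y. \<tau> (x * y) = \<tau> x * \<tau> y)"

definition positive_basis :: "nat \<Rightarrow> (nat \<Rightarrow> 'k::field_char_0 \<Rightarrow> complex) \<Rightarrow> (nat \<Rightarrow> 'k) \<Rightarrow> bool" where
  "positive_basis n \<sigma> e \<longleftrightarrow>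
     (let D = \<i> * detn n (\<lambda>j k. \<sigma> j (e k)) in Im D = 0 \<and> Re D > 0)"

definition alg_int :: "'k::field_char_0 \<Rightarrow> bool" where
  "alg_int x \<longleftrightarrow> (\<exists>p::int poly. lead_coeff p = 1 \<and> poly (map_poly of_int p) x = 0)"

definition O_K :: "'k::field_char_0 set" where
  "O_K = {x. alg_int x}"

definition int_ideal :: "'k::field_char_0 set \<Rightarrow> bool" where
  "int_ideal I \<longleftrightarrow> I \<subseteq> O_K \<and> I \<noteq> {0} \<and> 0 \<in> I \<and> (\<forall>x\<in>I. \<forall>y\<in>I. x + y \<in> I) \<and>
     (\<forall>x\<in>I. \<forall>y\<in>O_K. y * x \<in> I)"

definition ideal_mult :: "'k::field_char_0 set \<Rightarrow> 'k set \<Rightarrow> 'k set" where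
  "ideal_mult I J = {(\<Sum>i<n. x i * y i) | (n::nat) x y. \<forall>i<n. x i \<in> I \<and> y i \<in> J}"

definition ideal_add :: "'k::field_char_0 set \<Rightarrow> 'k set \<Rightarrow> 'k set" where
  "ideal_add I J = {x + y | x y. x \<in> I \<and> y \<in> J}"

definition frac_inv :: "'k::field_char_0 set \<Rightarrow> 'k set" where
  "frac_inv I = {x. \<forall>y\<in>I. x * y \<in> O_K}"

definition coprime_ideals :: "'k::field_char_0 set \<Rightarrow> 'k set \<Rightarrow> bool" where
  "coprime_ideals I J \<longleftrightarrow> ideal_add I J = O_K"

definition ideal_norm :: "'k::field_char_0 set \<Rightarrow> nat" where
  "ideal_norm I = card ((\<lambda>x. (\<lambda>y. x + y) ` I) ` O_K)"

definition generates_quot :: "'k::field_char_0 set \<Rightarrow> 'k set \<Rightarrow> 'k \<Rightarrow> bool" where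
  "generates_quot M L g \<longleftrightarrow> g \<in> M \<and> (\<forall>x\<in>M. \<exists>n::int. x - of_int n * g \<in> L)"

definition cyclic_quot :: "'k::field_char_0 set \<Rightarrow> 'k set \<Rightarrow> bool" where
  "cyclic_quot M L \<longleftrightarrow> (\<exists>g. generates_quot M L g)"

definition admissible :: "'k::field_char_0 set \<Rightarrow> 'k set \<Rightarrow> int \<Rightarrow> nat \<Rightarrow> 'k \<Rightarrow> bool" where
  "admissible L a q N h \<longleftrightarrow> h \<in> L \<and> h / of_int q - 1 \<in> L \<and>
     generates_quot (ideal_mult (frac_inv a) L) L (h / of_nat N)"

definition primitive_in :: "'k::field_char_0 set \<Rightarrow> 'k \<Rightarrow> bool" where
  "primitive_in L x \<longleftrightarrow> x \<in> L \<and> (\<forall>n::int. \<forall>y\<in>L. x = of_int n * y \<longrightarrow> \<bar>n\<bar> = 1)"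

definition pos_units_mod :: "nat \<Rightarrow> (nat \<Rightarrow> 'k::field_char_0 \<Rightarrow> complex) \<Rightarrow> 'k set \<Rightarrow> 'k set" where
  "pos_units_mod r \<sigma> f = {u. u \<noteq> 0 \<and> u \<in> O_K \<and> inverse u \<in> O_K \<and> u - 1 \<in> f \<and>
      (\<forall>j<r. Re (\<sigma> j u) > 0)}"

definition lam :: "nat \<Rightarrow> (nat \<Rightarrow> 'k::field_char_0) \<Rightarrow> (nat \<Rightarrow> 'k) \<Rightarrow> 'k \<Rightarrow> int" where
  "lam r e u h = (\<Prod>j\<le>r. zcoord (r+2) e (u j * h) j)"

(* the form a, with lambda * a(y) = det(h, u_1 h, ..., u_r h, y) in the basis e *)
definition form_a :: "nat \<Rightarrow> (nat \<Rightarrow> 'k::field_char_0) \<Rightarrow> (nat \<Rightarrow> 'k) \<Rightarrow> 'k \<Rightarrow> 'k \<Rightarrow> rat" where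
  "form_a r e u h y = of_int (detn (r+2) (\<lambda>i k. if k \<le> r then zcoord (r+2) e (u k * h) i
                                                   else zcoord (r+2) e y i)) / of_int (lam r e u h)"

(* the matrix \<A>, 0-indexed: entry (j,k) = a(u_j e_{k+1}), 0 \<le> j,k \<le> r *)
definition Amat :: "nat \<Rightarrow> (nat \<Rightarrow> 'k::field_char_0) \<Rightarrow> (nat \<Rightarrow> 'k) \<Rightarrow> 'k \<Rightarrow> nat \<Rightarrow> nat \<Rightarrow> rat" where
  "Amat r e u h j k = form_a r e u h (u j * e (k + 1))"

definition elem_divisors :: "nat \<Rightarrow> (nat \<Rightarrow> nat \<Rightarrow> rat) \<Rightarrow> (nat \<Rightarrow> int) \<Rightarrow> bool" where
  "elem_divisors n M A \<longleftrightarrow>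
     (\<exists>P Q :: nat \<Rightarrow> nat \<Rightarrow> int. detn n P \<in> {1, -1} \<and> detn n Q \<in> {1, -1} \<and>
        (\<forall>i<n. \<forall>j<n. (\<Sum>k<n. \<Sum>l<n. of_int (P i k) * M k l * of_int (Q l j))
                      = (if i = j then of_int (A i) else 0))) \<and>
     (\<forall>i<n. A i \<ge> 0) \<and> (\<forall>i. Suc i < n \<longrightarrow> A i dvd A (Suc i))"

definition basis_data ::
  "nat \<Rightarrow> (nat \<Rightarrow> 'k::field_char_0 \<Rightarrow> complex) \<Rightarrow> (nat \<Rightarrow> 'k) \<Rightarrow> 'k set \<Rightarrow> 'k
    \<Rightarrow> (nat \<Rightarrow> 'k) \<Rightarrow> (nat \<Rightarrow> int) \<Rightarrow> int \<Rightarrow> (nat \<Rightarrow> nat \<Rightarrow> rat) \<Rightarrow> (nat \<Rightarrow> 'k) \<Rightarrow> bool" where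
  "basis_data r \<sigma> u L h e A t b \<alpha> \<longleftrightarrow>
     is_Z_basis (r+2) L e \<and> positive_basis (r+2) \<sigma> e \<and> e 0 = h \<and>
     (\<forall>j\<le>r. (\<forall>k. j < k \<longrightarrow> zcoord (r+2) e (u j * h) k = 0) \<and> zcoord (r+2) e (u j * h) j > 0) \<and>
     elem_divisors (r+1) (Amat r e u h) A \<and> A 0 = 1 \<and> t = A r \<and>
     (\<forall>k\<le>r. \<forall>j\<le>r. (\<Sum>i\<in>{1..r+1}. Amat r e u h k (i - 1) * b i j)
                        = (if k = j then of_int t else 0)) \<and>
     (\<forall>j. \<alpha> j = (\<Sum>i\<in>{1..r+1}. of_rat (b i j) * e i))"

end

theory Submission
  imports Defs "Jordan_Normal_Form.Determinant" "Jordan_Normal_Form.Char_Poly"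
begin

lemma vs_rat: "vector_space (\<lambda>(c::rat) (x::'k::field_char_0). of_rat c * x)"
  by unfold_locales (auto simp: algebra_simps of_rat_add of_rat_mult)

lemma Qind_inj: assumes "Q_lin_indep n v" shows "inj_on v {..<n}"
proof (rule inj_onI, rule ccontr)
  fix i j assume ij: "i \<in> {..<n}" "j \<in> {..<n}" "v i = v j" "i \<noteq> j"
  define c :: "nat \<Rightarrow> rat" where "c = (\<lambda>k. if k = i then 1 else if k = j then -1 else 0)"
  have "(\<Sum>k<n. of_rat (c k) * v k) = (\<Sum>k\<in>{i,j}. of_rat (c k) * v k)"
    by (rule sum.mono_neutral_right) (use ij in \<open>auto simp: c_def\<close>)
  also have "\<dots> = 0" using ij by (simp add: c_def)
  finally have "c i = 0" using assms ij unfolding Q_lin_indep_def by blast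
  thus False by (simp add: c_def)
qed

lemma span_all:
  assumes w: "is_Q_basis n (w::nat\<Rightarrow>'k::field_char_0)" and v: "Q_lin_indep n (v::nat\<Rightarrow>'k)"
  shows "\<exists>c. x = (\<Sum>k<n. of_rat (c k) * v k)"
proof -
  interpret V: vector_space "\<lambda>(c::rat) (x::'k). of_rat c * x" by (rule vs_rat)
  have spw: "V.span (w ` {..<n}) = UNIV"
  proof safe
    fix y :: 'k
    from w obtain c where "y = (\<Sum>k<n. of_rat (c k) * w k)" unfolding is_Q_basis_def by blast
    also have "\<dots> \<in> V.span (w ` {..<n})"
      by (intro V.span_sum V.span_scale V.span_base) auto
    finally show "y \<in> V.span (w ` {..<n})" .
  qed simp
  have inj: "inj_on v {..<n}" by (rule Qind_inj[OF v])
  have ind: "V.independent (v ` {..<n})"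
  proof
    assume "V.dependent (v ` {..<n})"
    then obtain uu where uu: "\<exists>y\<in>v ` {..<n}. uu y \<noteq> 0" "(\<Sum>y\<in>v ` {..<n}. of_rat (uu y) * y) = 0"
      using V.dependent_finite[of "v ` {..<n}"] by blast
    have "(\<Sum>k<n. of_rat (uu (v k)) * v k) = 0" using uu(2) by (simp add: sum.reindex[OF inj])
    hence "\<forall>k<n. uu (v k) = 0" using v[unfolded Q_lin_indep_def, rule_format, of "\<lambda>k. uu (v k)"] by simp
    with uu(1) show False by auto
  qed
  show ?thesis
  proof (cases "x \<in> V.span (v ` {..<n})")
    case True
    then obtain uu where "x = (\<Sum>y\<in>v ` {..<n}. of_rat (uu y) * y)" using V.span_finite[of "v ` {..<n}"] by auto
    hence "x = (\<Sum>k<n. of_rat (uu (v k)) * v k)" by (simp add: sum.reindex[OF inj])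
    thus ?thesis by (rule exI[of _ "\<lambda>k. uu (v k)"])
  next
    case False
    have ii: "V.independent (insert x (v ` {..<n}))" using V.independent_insertI[OF False ind] .
    have fin: "finite (w ` {..<n})" by simp
    have sub: "insert x (v ` {..<n}) \<subseteq> V.span (w ` {..<n})" unfolding spw by (rule subset_UNIV)
    have "card (insert x (v ` {..<n})) \<le> card (w ` {..<n})"
      using V.independent_span_bound[OF fin ii sub] by (rule conjunct2)
    moreover have "x \<notin> v ` {..<n}"
    proof
      assume "x \<in> v ` {..<n}"
      hence "x \<in> V.span (v ` {..<n})" by (rule V.span_base)
      with False show False by contradiction
    qed
    hence "card (insert x (v ` {..<n})) = Suc n"
      by (simp add: card_image[OF inj])
    moreover have "card (w ` {..<n}) \<le> n" by (metis card_image_le card_lessThan finite_lessThan)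
    ultimately show ?thesis by simp
  qed
qed

lemma common_denom: "\<exists>D::int. D > 0 \<and> (\<exists>d::nat\<Rightarrow>int. \<forall>k<n. of_int (d k) = of_int D * (c k :: rat))"
proof (induction n)
  case 0 show ?case by (intro exI[of _ 1]) auto
next
  case (Suc n)
  then obtain D d where D: "D > 0" "\<forall>k<n. of_int (d k) = of_int D * c k" by blast
  obtain a b where ab: "quotient_of (c n) = (a, b)" by (cases "quotient_of (c n)")
  have b: "b > 0" and cn: "c n = of_int a / of_int b"
    using quotient_of_denom_pos[OF ab] quotient_of_div[OF ab] by auto
  define d' where "d' k = (if k < n then d k * b else D * a)" for k
  show ?case
  proof (intro exI[of _ "D*b"] conjI exI[of _ d'] allI impI)
    show "D*b > 0" using D b by simp
    fix k assume k: "k < Suc n"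
    show "of_int (d' k) = of_int (D*b) * c k"
    proof (cases "k < n")
      case True
      have "of_int (d k) = of_int D * c k" using D True by simp
      thus ?thesis using True by (simp add: d'_def mult_ac)
    next
      case False hence "k = n" using k by simp
      have bnz: "rat_of_int b \<noteq> 0" using b by simp
      show ?thesis unfolding \<open>k = n\<close> d'_def cn using bnz by (simp add: field_simps)
    qed
  qed
qed

lemma Zbasis_Qind: assumes "is_Z_basis n S (e::nat\<Rightarrow>'k::field_char_0)" shows "Q_lin_indep n e"
  unfolding Q_lin_indep_def
proof (rule allI, rule impI)
  fix c :: "nat \<Rightarrow> rat" assume c0: "(\<Sum>k<n. of_rat (c k) * e k) = 0"
  obtain D d where D: "D > 0" "\<forall>k<n. of_int (d k) = of_int D * c k" using common_denom by blast
  have "(\<Sum>k<n. of_int (d k) * e k) = (of_int D :: 'k) * (\<Sum>k<n. of_rat (c k) * e k)"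
    unfolding sum_distrib_left
  proof (rule sum.cong)
    fix k assume k: "k \<in> {..<n}"
    have "(of_int (d k) :: 'k) = of_rat (of_int (d k))" by simp
    also have "\<dots> = of_rat (of_int D * c k)" using D k by simp
    also have "\<dots> = of_int D * of_rat (c k)" by (simp add: of_rat_mult)
    finally show "of_int (d k) * e k = of_int D * (of_rat (c k) * e k)" by (simp add: mult.assoc)
  qed simp
  also have "\<dots> = 0" using c0 by simp
  finally have d0: "\<forall>k<n. d k = 0" using assms unfolding is_Z_basis_def by blast
  show "\<forall>k<n. c k = 0"
  proof (intro allI impI)
    fix k assume k: "k < n"
    have "rat_of_int D * c k = 0" using D(2) d0 k by (metis of_int_0)
    thus "c k = 0" using D(1) by simp
  qed
qed

definition qlin :: "('k::field_char_0 \<Rightarrow> rat) \<Rightarrow> bool" where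
  "qlin \<phi> \<longleftrightarrow> (\<forall>x y. \<phi> (x+y) = \<phi> x + \<phi> y) \<and> (\<forall>c x. \<phi> (of_rat c * x) = c * \<phi> x)"

lemma qlin_add: "qlin \<phi> \<Longrightarrow> \<phi> (x+y) = \<phi> x + \<phi> y" by (simp add: qlin_def)
lemma qlin_scale: "qlin \<phi> \<Longrightarrow> \<phi> (of_rat c * x) = c * \<phi> x" by (simp add: qlin_def)
lemma qlin_zero: "qlin \<phi> \<Longrightarrow> \<phi> 0 = 0" using qlin_scale[of \<phi> 0 0] by simp
lemma qlin_diff: assumes "qlin \<phi>" shows "\<phi> (x - y) = \<phi> x - \<phi> y"
proof -
  have "\<phi> (x - y) + \<phi> y = \<phi> x" using qlin_add[OF assms, of "x-y" y] by simp
  thus ?thesis by simp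
qed
lemma qlin_sum: assumes "qlin \<phi>"
  shows "\<phi> (\<Sum>k\<in>A. of_rat (c k) * v k) = (\<Sum>k\<in>A. c k * \<phi> (v k))"
proof (induct A rule: infinite_finite_induct)
  case (infinite A) thus ?case using qlin_zero[OF assms] by simp
next
  case empty thus ?case using qlin_zero[OF assms] by simp
next
  case (insert x F) thus ?case using qlin_add[OF assms] qlin_scale[OF assms] by simp
qed

lemma ker_span:
  fixes u w :: "nat \<Rightarrow> 'k::field_char_0"
  assumes w: "is_Q_basis (r+2) w" and ind: "Q_lin_indep (r+1) u" and psi: "qlin \<psi>"
    and pu: "\<forall>k\<le>r. \<psi> (u k) = 0" and py: "\<psi> y0 = 1" and px: "\<psi> x = 0"
  shows "\<exists>c. x = (\<Sum>k<r+1. of_rat (c k) * u k)"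
proof -
  define v where "v k = (if k \<le> r then u k else y0)" for k
  have sv: "(\<Sum>k<r+2. of_rat (c k) * v k) = (\<Sum>k<r+1. of_rat (c k) * u k) + of_rat (c (r+1)) * y0" for c
  proof -
    have e2: "r+2 = Suc (r+1)" by simp
    have "(\<Sum>k<r+2. of_rat (c k) * v k) = (\<Sum>k<r+1. of_rat (c k) * v k) + of_rat (c (r+1)) * v (r+1)"
      unfolding e2 by (rule sum.lessThan_Suc)
    moreover have "(\<Sum>k<r+1. of_rat (c k) * v k) = (\<Sum>k<r+1. of_rat (c k) * u k)"
      by (rule sum.cong) (auto simp: v_def)
    moreover have "v (r+1) = y0" by (simp add: v_def)
    ultimately show ?thesis by simp
  qed
  have pv: "\<psi> (\<Sum>k<r+2. of_rat (c k) * v k) = c (r+1)" for c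
  proof -
    have "\<psi> (\<Sum>k<r+1. of_rat (c k) * u k) = (\<Sum>k<r+1. c k * \<psi> (u k))"
      using qlin_sum[OF psi, of c u "{..<r+1}"] by simp
    also have "\<dots> = 0" using pu by (intro sum.neutral) auto
    finally have "\<psi> (\<Sum>k<r+1. of_rat (c k) * u k) = 0" .
    thus ?thesis unfolding sv using qlin_add[OF psi] qlin_scale[OF psi] py by simp
  qed
  have "Q_lin_indep (r+2) v"
    unfolding Q_lin_indep_def
  proof (rule allI, rule impI)
    fix c assume h: "(\<Sum>k<r+2. of_rat (c k) * v k) = 0"
    have "c (r+1) = \<psi> 0" using pv[of c] unfolding h by (rule sym)
    hence c1: "c (r+1) = 0" using qlin_zero[OF psi] by (rule trans)
    have "(\<Sum>k<r+1. of_rat (c k) * u k) + of_rat (c (r+1)) * y0 = 0" using h unfolding sv .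
    hence A0: "(\<Sum>k<r+1. of_rat (c k) * u k) = 0" unfolding c1 by simp
    have c2: "\<forall>k<r+1. c k = 0" using mp[OF spec[OF ind[unfolded Q_lin_indep_def], of c] A0] .
    show "\<forall>k<r+2. c k = 0"
    proof (intro allI impI)
      fix k assume "k < r+2" hence "k < r+1 \<or> k = r+1" by linarith
      thus "c k = 0" using c1 c2 by auto
    qed
  qed
  from span_all[OF w this] obtain c where c: "x = (\<Sum>k<r+2. of_rat (c k) * v k)" by blast
  have "c (r+1) = \<psi> x" using pv[of c] unfolding c[symmetric] by (rule sym)
  hence c0: "c (r+1) = 0" using px by simp
  have "x = (\<Sum>k<r+1. of_rat (c k) * u k) + of_rat (c (r+1)) * y0" using c unfolding sv .
  hence "x = (\<Sum>k<r+1. of_rat (c k) * u k)" unfolding c0 by simp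
  thus ?thesis by (rule exI[of _ c])
qed

lemma prop_func:
  fixes u w :: "nat \<Rightarrow> 'k::field_char_0"
  assumes w: "is_Q_basis (r+2) w" and ind: "Q_lin_indep (r+1) u" and psi: "qlin \<psi>"
    and pu: "\<forall>k\<le>r. \<psi> (u k) = 0" and py: "\<psi> y0 = 1"
    and F: "qlin F" and Fu: "\<forall>k\<le>r. F (u k) = 0"
  shows "F y = \<psi> y * F y0"
proof -
  let ?z = "y - of_rat (\<psi> y) * y0"
  have "\<psi> ?z = 0" using qlin_diff[OF psi] qlin_scale[OF psi] py by simp
  then obtain c where c: "?z = (\<Sum>k<r+1. of_rat (c k) * u k)" using ker_span[OF w ind psi pu py] by blast
  have "F ?z = (\<Sum>k<r+1. c k * F (u k))" unfolding c qlin_sum[OF F] ..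
  also have "\<dots> = 0" using Fu by (intro sum.neutral) auto
  finally have "F ?z = 0" .
  thus ?thesis using qlin_diff[OF F] qlin_scale[OF F] by simp
qed

lemma stab:
  fixes u w :: "nat \<Rightarrow> 'k::field_char_0"
  assumes w: "is_Q_basis (r+2) w" and ind: "Q_lin_indep (r+1) u" and psi: "qlin \<psi>"
    and pu: "\<forall>k\<le>r. \<psi> (u k) = 0" and py: "\<psi> y0 = 1"
    and xs: "\<forall>k\<le>r. \<psi> (u k * x) = 0"
  shows "\<exists>l. x = of_rat l"
proof -
  have F: "qlin (\<lambda>y. \<psi> (x * y))"
  proof -
    have "\<psi> (x*(a+b)) = \<psi> (x*a) + \<psi> (x*b)" for a b
      by (simp only: distrib_left qlin_add[OF psi])
    moreover have "\<psi> (x*(of_rat c*a)) = c * \<psi> (x*a)" for a c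
    proof -
      have "x*(of_rat c*a) = of_rat c*(x*a)" by (rule mult.left_commute)
      thus ?thesis by (simp only: qlin_scale[OF psi])
    qed
    ultimately show ?thesis unfolding qlin_def by blast
  qed
  have Fu: "\<forall>k\<le>r. \<psi> (x * u k) = 0"
  proof (intro allI impI)
    fix k assume "k \<le> r"
    hence "\<psi> (u k * x) = 0" using xs by blast
    moreover have "x * u k = u k * x" by (rule mult.commute)
    ultimately show "\<psi> (x * u k) = 0" by (simp only:)
  qed
  define l where "l = \<psi> (x * y0)"
  have c2: "\<psi> (x * y) = \<psi> y * l" for y
  proof -
    have "\<psi> (x * y) = \<psi> y * \<psi> (x * y0)" by (rule prop_func[OF w ind psi pu py F Fu])
    thus ?thesis unfolding l_def .
  qed
  show ?thesis
  proof (rule ccontr)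
    assume "\<nexists>l. x = of_rat l"
    hence ne: "x - of_rat l \<noteq> 0" by auto
    define y where "y = y0 / (x - of_rat l)"
    have "(x - of_rat l) * y = y0" using ne by (simp add: y_def)
    hence "y0 = x * y - of_rat l * y" by (metis left_diff_distrib)
    hence "\<psi> y0 = \<psi> (x * y) - l * \<psi> y" using qlin_diff[OF psi] qlin_scale[OF psi] by simp
    also have "\<dots> = 0" using c2 by simp
    finally show False using py by simp
  qed
qed

lemma Zind: "is_Z_basis n S e \<Longrightarrow> (\<Sum>k<n. of_int (c k) * e k) = 0 \<Longrightarrow> k < n \<Longrightarrow> c k = 0"
  unfolding is_Z_basis_def by blast

lemma Qind: "Q_lin_indep n e \<Longrightarrow> (\<Sum>k<n. of_rat (c k) * e k) = 0 \<Longrightarrow> k < n \<Longrightarrow> c k = 0"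
  unfolding Q_lin_indep_def by blast

lemma Zmem: "is_Z_basis n S e \<Longrightarrow> x = (\<Sum>k<n. of_int (c k) * e k) \<Longrightarrow> x \<in> S"
  unfolding is_Z_basis_def by blast

lemma zcoord_prop:
  assumes Z: "is_Z_basis n S e" and x: "x \<in> S"
  shows "x = (\<Sum>k<n. of_int (zcoord n e x k) * e k)" "\<forall>k\<ge>n. zcoord n e x k = 0"
proof -
  from Z x obtain c where c: "x = (\<Sum>k<n. of_int (c k) * e k)" unfolding is_Z_basis_def by blast
  define c' where "c' k = (if k < n then c k else 0)" for k
  have "(\<Sum>k<n. of_int (c' k) * e k) = (\<Sum>k<n. of_int (c k) * e k)"
    by (rule sum.cong) (auto simp: c'_def)
  hence P: "(\<forall>k\<ge>n. c' k = 0) \<and> x = (\<Sum>k<n. of_int (c' k) * e k)" using c by (auto simp: c'_def)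
  have U: "d = c'" if d: "(\<forall>k\<ge>n. d k = 0) \<and> x = (\<Sum>k<n. of_int (d k) * e k)" for d
  proof
    fix k show "d k = c' k"
    proof (cases "k < n")
      case True
      have "(\<Sum>k<n. of_int (d k - c' k) * e k) = (\<Sum>k<n. of_int (d k) * e k) - (\<Sum>k<n. of_int (c' k) * e k)"
        by (simp add: sum_subtractf left_diff_distrib)
      also have "\<dots> = 0" using d P by simp
      finally have "d k - c' k = 0" using Zind[OF Z _ True, of "\<lambda>k. d k - c' k"] by simp
      thus ?thesis by simp
    next
      case False thus ?thesis using d P by simp
    qed
  qed
  have "zcoord n e x = c'" unfolding zcoord_def
    apply (rule the_equality)
     apply (rule P)
    apply (rule U)
    apply assumption
    done
  thus "x = (\<Sum>k<n. of_int (zcoord n e x k) * e k)" "\<forall>k\<ge>n. zcoord n e x k = 0" using P by auto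
qed

lemma zcoord_unique:
  assumes Z: "is_Z_basis n S e" and x: "x = (\<Sum>k<n. of_int (c k) * e k)" and k: "k < n"
  shows "zcoord n e x k = c k"
proof -
  have xS: "x \<in> S" using Zmem[OF Z x] .
  have "(\<Sum>k<n. of_int (zcoord n e x k - c k) * e k) = (\<Sum>k<n. of_int (zcoord n e x k) * e k) - (\<Sum>k<n. of_int (c k) * e k)"
    by (simp add: sum_subtractf left_diff_distrib)
  also have "\<dots> = 0" using zcoord_prop(1)[OF Z xS] x by simp
  finally have "zcoord n e x k - c k = 0" using Zind[OF Z _ k, of "\<lambda>k. zcoord n e x k - c k"] by simp
  thus ?thesis by simp
qed

definition qspans :: "nat \<Rightarrow> (nat \<Rightarrow> 'k::field_char_0) \<Rightarrow> bool" where
  "qspans n e \<longleftrightarrow> (\<forall>x. \<exists>c. x = (\<Sum>k<n. of_rat (c k) * e k))"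

definition qc :: "nat \<Rightarrow> (nat \<Rightarrow> 'k::field_char_0) \<Rightarrow> 'k \<Rightarrow> nat \<Rightarrow> rat" where
  "qc n e x = (SOME c. x = (\<Sum>k<n. of_rat (c k) * e k))"

lemma qc_prop: assumes "qspans n e" shows "x = (\<Sum>k<n. of_rat (qc n e x k) * e k)"
proof -
  have "\<exists>c. x = (\<Sum>k<n. of_rat (c k) * e k)" using assms unfolding qspans_def by blast
  thus ?thesis unfolding qc_def by (rule someI_ex)
qed

lemma qc_unique:
  assumes Q: "Q_lin_indep n e" and S: "qspans n e" and x: "x = (\<Sum>k<n. of_rat (c k) * e k)" and k: "k < n"
  shows "qc n e x k = c k"
proof -
  have "(\<Sum>k<n. of_rat (qc n e x k - c k) * e k) = (\<Sum>k<n. of_rat (qc n e x k) * e k) - (\<Sum>k<n. of_rat (c k) * e k)"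
    by (simp add: sum_subtractf left_diff_distrib of_rat_diff)
  also have "\<dots> = x - x" using qc_prop[OF S, of x] x by simp
  finally have "qc n e x k - c k = 0" using Qind[OF Q _ k, of "\<lambda>k. qc n e x k - c k"] by simp
  thus ?thesis by simp
qed

lemma qc_add:
  assumes Q: "Q_lin_indep n e" and S: "qspans n e" and k: "k < n"
  shows "qc n e (x + y) k = qc n e x k + qc n e y k"
proof -
  have hx: "x = (\<Sum>k<n. of_rat (qc n e x k) * e k)" by (rule qc_prop[OF S])
  have hy: "y = (\<Sum>k<n. of_rat (qc n e y k) * e k)" by (rule qc_prop[OF S])
  have "x + y = (\<Sum>k<n. of_rat (qc n e x k) * e k) + (\<Sum>k<n. of_rat (qc n e y k) * e k)"
    using hx hy by (rule arg_cong2)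
  also have "\<dots> = (\<Sum>k<n. of_rat (qc n e x k + qc n e y k) * e k)"
    by (simp add: of_rat_add distrib_right sum.distrib)
  finally show ?thesis by (rule qc_unique[OF Q S _ k])
qed

lemma qc_scale:
  assumes Q: "Q_lin_indep n e" and S: "qspans n e" and k: "k < n"
  shows "qc n e (of_rat a * x) k = a * qc n e x k"
proof -
  have hx: "x = (\<Sum>k<n. of_rat (qc n e x k) * e k)" by (rule qc_prop[OF S])
  have "of_rat a * x = of_rat a * (\<Sum>k<n. of_rat (qc n e x k) * e k)"
    using hx by (rule arg_cong)
  also have "\<dots> = (\<Sum>k<n. of_rat (a * qc n e x k) * e k)"
    by (simp add: of_rat_mult sum_distrib_left mult.assoc)
  finally show ?thesis by (rule qc_unique[OF Q S _ k])
qed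

lemma qc_int:
  assumes Z: "is_Z_basis n S e" and S: "qspans n e" and x: "x \<in> S" and k: "k < n"
  shows "qc n e x k = of_int (zcoord n e x k)"
proof -
  have Q: "Q_lin_indep n e" by (rule Zbasis_Qind[OF Z])
  have "x = (\<Sum>k<n. of_int (zcoord n e x k) * e k)" by (rule zcoord_prop(1)[OF Z x])
  also have "\<dots> = (\<Sum>k<n. of_rat (of_int (zcoord n e x k)) * e k)" by simp
  finally show ?thesis by (rule qc_unique[OF Q S _ k])
qed

lemma qc_basis:
  assumes Q: "Q_lin_indep n e" and S: "qspans n e" and j: "j < n" and k: "k < n"
  shows "qc n e (e j) k = (if k = j then 1 else 0)"
proof -
  have "(\<Sum>k<n. of_rat (if k = j then 1 else 0) * e k) = (\<Sum>k<n. if k = j then e k else 0)"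
    by (rule sum.cong) auto
  also have "\<dots> = e j" using j by (simp add: sum.delta)
  finally have "e j = (\<Sum>k<n. of_rat (if k = j then 1 else 0) * e k)" by (rule sym)
  thus ?thesis by (rule qc_unique[OF Q S _ k])
qed

lemma detn_det: "detn n M = det (mat n n (\<lambda>(i,j). M i j))"
  unfolding detn_def by (subst det_def'[of _ n]) (auto intro!: sum.cong prod.cong simp: atLeast0LessThan)

definition PhiM :: "nat \<Rightarrow> (nat \<Rightarrow> 'k::field_char_0) \<Rightarrow> (nat \<Rightarrow> 'k) \<Rightarrow> 'k \<Rightarrow> 'k \<Rightarrow> rat mat" where
  "PhiM r e u h x = mat (r+2) (r+2) (\<lambda>(i,k). if k \<le> r then rat_of_int (zcoord (r+2) e (u k * h) i) else qc (r+2) e x i)"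

definition Phi :: "nat \<Rightarrow> (nat \<Rightarrow> 'k::field_char_0) \<Rightarrow> (nat \<Rightarrow> 'k) \<Rightarrow> 'k \<Rightarrow> 'k \<Rightarrow> rat" where
  "Phi r e u h x = det (PhiM r e u h x) / of_int (lam r e u h)"

lemma PhiM_carrier: "PhiM r e u h x \<in> carrier_mat (r+2) (r+2)" by (simp add: PhiM_def)

lemma Phi_expand:
  "det (PhiM r e u h x) = (\<Sum>i<r+2. qc (r+2) e x i * cofactor (PhiM r e u h 0) i (r+1))"
proof -
  have "det (PhiM r e u h x) = (\<Sum>i<r+2. PhiM r e u h x $$ (i, r+1) * cofactor (PhiM r e u h x) i (r+1))"
    by (rule laplace_expansion_column[OF PhiM_carrier]) simp
  also have "\<dots> = (\<Sum>i<r+2. qc (r+2) e x i * cofactor (PhiM r e u h 0) i (r+1))"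
  proof (rule sum.cong[OF refl])
    fix i assume i: "i \<in> {..<r+2}"
    have "mat_delete (PhiM r e u h x) i (r+1) = mat_delete (PhiM r e u h 0) i (r+1)"
      by (rule eq_matI) (auto simp: mat_delete_def PhiM_def)
    thus "PhiM r e u h x $$ (i, r+1) * cofactor (PhiM r e u h x) i (r+1) = qc (r+2) e x i * cofactor (PhiM r e u h 0) i (r+1)"
      using i by (simp add: cofactor_def PhiM_def)
  qed
  finally show ?thesis .
qed

lemma Phi_qlin:
  assumes Q: "Q_lin_indep (r+2) e" and S: "qspans (r+2) e"
  shows "qlin (Phi r e u h)"
  unfolding qlin_def
proof (intro conjI allI)
  let ?g = "\<lambda>i. cofactor (PhiM r e u h 0) i (r+1)"
  fix x y
  have "(\<Sum>i<r+2. qc (r+2) e (x+y) i * ?g i) = (\<Sum>i<r+2. qc (r+2) e x i * ?g i) + (\<Sum>i<r+2. qc (r+2) e y i * ?g i)"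
    unfolding sum.distrib[symmetric]
  proof (rule sum.cong[OF refl])
    fix i assume "i \<in> {..<r+2}" hence i: "i < r+2" by simp
    show "qc (r+2) e (x+y) i * ?g i = qc (r+2) e x i * ?g i + qc (r+2) e y i * ?g i"
      unfolding qc_add[OF Q S i] by (simp add: distrib_right)
  qed
  thus "Phi r e u h (x + y) = Phi r e u h x + Phi r e u h y"
    unfolding Phi_def Phi_expand by (simp add: add_divide_distrib)
next
  let ?g = "\<lambda>i. cofactor (PhiM r e u h 0) i (r+1)"
  fix c x
  have "(\<Sum>i<r+2. qc (r+2) e (of_rat c * x) i * ?g i) = c * (\<Sum>i<r+2. qc (r+2) e x i * ?g i)"
    unfolding sum_distrib_left
  proof (rule sum.cong[OF refl])
    fix i assume "i \<in> {..<r+2}" hence i: "i < r+2" by simp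
    show "qc (r+2) e (of_rat c * x) i * ?g i = c * (qc (r+2) e x i * ?g i)"
      unfolding qc_scale[OF Q S i] by (simp add: mult.assoc)
  qed
  thus "Phi r e u h (of_rat c * x) = c * Phi r e u h x"
    unfolding Phi_def Phi_expand by simp
qed

lemma Phi_form:
  assumes Z: "is_Z_basis (r+2) S e" and S: "qspans (r+2) e" and x: "x \<in> S"
  shows "form_a r e u h x = Phi r e u h x"
proof -
  let ?M = "mat (r+2) (r+2) (\<lambda>(i,k). if k \<le> r then zcoord (r+2) e (u k * h) i else zcoord (r+2) e x i)"
  have qi: "qc (Suc (Suc r)) e x i = of_int (zcoord (Suc (Suc r)) e x i)" if "i < Suc (Suc r)" for i
    using qc_int[OF Z S x, of i] that by simp
  have mm: "map_mat rat_of_int ?M = PhiM r e u h x"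
    by (rule eq_matI) (auto simp: PhiM_def qi)
  have "det (map_mat rat_of_int ?M) = of_int (det ?M)" by (rule of_int_hom.hom_det)
  hence "of_int (det ?M) = det (PhiM r e u h x)" unfolding mm by (rule sym)
  moreover have "detn (r+2) (\<lambda>i k. if k \<le> r then zcoord (r+2) e (u k * h) i else zcoord (r+2) e x i) = det ?M"
    unfolding detn_det by (rule arg_cong[where f=det]) (auto intro!: cong_mat)
  ultimately show ?thesis unfolding form_a_def Phi_def by simp
qed

lemma Phi_zero:
  assumes Z: "is_Z_basis (r+2) S e" and S: "qspans (r+2) e" and k: "k \<le> r" and uS: "u k * h \<in> S"
  shows "Phi r e u h (u k * h) = 0"
proof -
  have "det (PhiM r e u h (u k * h)) = 0"
  proof (rule det_identical_columns[OF PhiM_carrier, of k "r+1"])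
    show "k \<noteq> r+1" "k < r+2" "r+1 < r+2" using k by auto
    show "col (PhiM r e u h (u k * h)) k = col (PhiM r e u h (u k * h)) (r + 1)"
    proof (rule eq_vecI)
      have qi: "qc (Suc (Suc r)) e (u k * h) i = of_int (zcoord (Suc (Suc r)) e (u k * h) i)" if "i < Suc (Suc r)" for i
        using qc_int[OF Z S uS, of i] that by simp
      fix i assume "i < dim_vec (col (PhiM r e u h (u k * h)) (r + 1))"
      thus "col (PhiM r e u h (u k * h)) k $ i = col (PhiM r e u h (u k * h)) (r + 1) $ i"
        using k by (auto simp: PhiM_def qi)
    qed (simp add: PhiM_def)
  qed
  thus ?thesis by (simp add: Phi_def)
qed

lemma prod_list_upt: "prod_list (map f [0..<n]) = prod f {0..<n}"
  by (induct n) (auto simp: mult.commute)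

lemma Phi_top:
  assumes Z: "is_Z_basis (r+2) S e" and S: "qspans (r+2) e"
    and tri: "\<forall>j\<le>r. (\<forall>k. j < k \<longrightarrow> zcoord (r+2) e (u j * h) k = 0) \<and> zcoord (r+2) e (u j * h) j > 0"
  shows "Phi r e u h (e (r+1)) = 1"
proof -
  have Q: "Q_lin_indep (r+2) e" by (rule Zbasis_Qind[OF Z])
  let ?A = "PhiM r e u h (e (r+1))"
  have qcb: "qc (r+2) e (e (r+1)) i = (if i = r+1 then 1 else 0)" if "i < r+2" for i
    using qc_basis[OF Q S _ that, of "r+1"] by simp
  have ut: "upper_triangular ?A"
    unfolding upper_triangular_def
  proof (intro allI impI)
    fix i j assume i: "i < dim_row ?A" and ji: "j < i"
    hence "i < r+2" by (simp add: PhiM_def)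
    hence jr: "j \<le> r" using ji by simp
    thus "?A $$ (i,j) = 0" using tri ji \<open>i < r+2\<close> by (auto simp: PhiM_def)
  qed
  have "det ?A = prod_list (diag_mat ?A)" by (rule det_upper_triangular[OF ut PhiM_carrier])
  also have "\<dots> = (\<Prod>i\<in>{0..<r+2}. ?A $$ (i,i))" unfolding diag_mat_def prod_list_upt
    by (simp add: PhiM_def)
  also have "\<dots> = (\<Prod>i\<in>{0..<r+1}. ?A $$ (i,i)) * ?A $$ (r+1, r+1)" by simp
  also have "\<dots> = (\<Prod>i\<in>{0..<r+1}. rat_of_int (zcoord (r+2) e (u i * h) i))"
  proof -
    have A1: "?A $$ (r+1, r+1) = 1" unfolding PhiM_def using qcb[of "r+1"] by simp
    have Ai: "?A $$ (i,i) = rat_of_int (zcoord (r+2) e (u i * h) i)" if "i \<in> {0..<r+1}" for i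
      using that unfolding PhiM_def by simp
    show ?thesis unfolding A1 using Ai by simp
  qed
  also have "\<dots> = of_int (lam r e u h)"
    unfolding lam_def of_int_prod by (rule prod.cong) auto
  finally have d: "det ?A = of_int (lam r e u h)" .
  have "lam r e u h > 0" unfolding lam_def using tri by (intro prod_pos) auto
  thus ?thesis unfolding Phi_def d by simp
qed

lemma Zbasis_mem:
  assumes Z: "is_Z_basis n S e" and i: "i < n"
  shows "e i \<in> S"
proof -
  have "(\<Sum>k<n. of_int (if k = i then 1 else 0) * e k) = (\<Sum>k<n. if k = i then e k else 0)"
    by (rule sum.cong) auto
  also have "\<dots> = e i" using i by (simp add: sum.delta)
  finally show ?thesis using Zmem[OF Z] by metis
qed

lemma det_trick:
  fixes z :: "'k::field_char_0"
  assumes Z: "is_Z_basis n S e" and n: "0 < n" and nz: "e 0 \<noteq> 0" and cl: "\<forall>y\<in>S. z * y \<in> S"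
  shows "alg_int z"
proof -
  define Ai where "Ai = mat n n (\<lambda>(i,j). zcoord n e (z * e i) j)"
  define AK where "AK = map_mat (of_int :: int \<Rightarrow> 'k) Ai"
  define v where "v = vec n e"
  have Aic: "Ai \<in> carrier_mat n n" by (simp add: Ai_def)
  have AK: "AK \<in> carrier_mat n n" by (simp add: AK_def Ai_def)
  have "AK *\<^sub>v v = z \<cdot>\<^sub>v v"
  proof (rule eq_vecI)
    fix i assume "i < dim_vec (z \<cdot>\<^sub>v v)" hence i: "i < n" by (simp add: v_def)
    have "(AK *\<^sub>v v) $ i = (\<Sum>j<n. of_int (zcoord n e (z * e i) j) * e j)"
      using i by (simp add: AK_def Ai_def v_def scalar_prod_def atLeast0LessThan)
    also have "\<dots> = z * e i"
      using zcoord_prop(1)[OF Z cl[rule_format, OF Zbasis_mem[OF Z i]]] by (rule sym)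
    finally show "(AK *\<^sub>v v) $ i = (z \<cdot>\<^sub>v v) $ i" using i by (simp add: v_def)
  qed (simp add: AK_def Ai_def v_def)
  moreover have "v \<in> carrier_vec n" by (simp add: v_def)
  moreover have "v \<noteq> 0\<^sub>v n"
  proof
    assume "v = 0\<^sub>v n"
    hence "v $ 0 = 0" using n by simp
    thus False using nz n by (simp add: v_def)
  qed
  ultimately have "eigenvector AK v z" unfolding eigenvector_def using AK by simp
  hence "eigenvalue AK z" unfolding eigenvalue_def by blast
  hence "poly (char_poly AK) z = 0" using eigenvalue_root_char_poly[OF AK] by simp
  moreover have "char_poly AK = map_poly of_int (char_poly Ai)"
    unfolding AK_def by (rule of_int_hom.char_poly_hom[OF Aic])
  moreover have "lead_coeff (char_poly Ai) = 1" using degree_monic_char_poly[OF Aic] by simp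
  ultimately show ?thesis unfolding alg_int_def by auto
qed

lemma chain_dvd:
  assumes ch: "\<forall>i. Suc i < n \<longrightarrow> A i dvd A (Suc i)" and j: "j < n" and ij: "i \<le> j"
  shows "A i dvd (A j :: int)"
  using j ij
proof (induct j)
  case 0 thus ?case by simp
next
  case (Suc j)
  show ?case
  proof (cases "i = Suc j")
    case True thus ?thesis by simp
  next
    case False
    hence "A i dvd A j" using Suc by simp
    moreover have "A j dvd A (Suc j)" using ch Suc(2) by simp
    ultimately show ?thesis by (rule dvd_trans)
  qed
qed

lemma mat3_entry:
  assumes "A \<in> carrier_mat n n" "B \<in> carrier_mat n n" "C \<in> carrier_mat n n" "i < n" "j < n"
  shows "(A * B * C) $$ (i,j) = (\<Sum>k<n. \<Sum>l<n. A $$ (i,k) * B $$ (k,l) * C $$ (l,j))"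
proof -
  have "(A * B * C) $$ (i,j) = (\<Sum>k<n. A $$ (i,k) * (\<Sum>l<n. B $$ (k,l) * C $$ (l,j)))"
    using assms by (simp add: scalar_prod_def atLeast0LessThan)
  also have "\<dots> = (\<Sum>k<n. \<Sum>l<n. A $$ (i,k) * B $$ (k,l) * C $$ (l,j))"
    by (simp add: sum_distrib_left mult.assoc)
  finally show ?thesis .
qed

lemma mat_inv_ex:
  assumes "A \<in> carrier_mat n n" "det A \<noteq> (0::'a::field)"
  shows "\<exists>B\<in>carrier_mat n n. A * B = 1\<^sub>m n \<and> B * A = 1\<^sub>m n"
  using det_non_zero_imp_unit[OF assms, of "()"] unfolding Units_def ring_mat_def by auto

lemma side:
  fixes e u \<alpha> w :: "nat \<Rightarrow> 'k::field_char_0"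
  assumes w: "is_Q_basis (r+2) w"
    and bd: "basis_data r \<sigma> u S h e A t B \<alpha>"
    and clos: "\<forall>k\<le>r. \<forall>y\<in>S. u k * y \<in> S"
    and inj: "\<And>x. \<forall>k\<le>r. Phi r e u h (u k * (x * h)) = 0 \<Longrightarrow> \<exists>l. x = of_rat l"
  shows "t \<noteq> 0" "\<forall>k\<le>r. \<forall>j\<le>r. Phi r e u h (u k * \<alpha> j) = (if k = j then of_int t else 0)"
    "\<forall>i\<in>{1..r+1}. \<forall>j\<le>r. B i j \<in> \<int>"
proof -
  have Z: "is_Z_basis (r+2) S e" and e0: "e 0 = h"
    and tri: "\<forall>j\<le>r. (\<forall>k. j < k \<longrightarrow> zcoord (r+2) e (u j * h) k = 0) \<and> zcoord (r+2) e (u j * h) j > 0"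
    and ED: "elem_divisors (r+1) (Amat r e u h) A" and tA: "t = A r"
    and Beq: "\<forall>k\<le>r. \<forall>j\<le>r. (\<Sum>i\<in>{1..r+1}. Amat r e u h k (i - 1) * B i j) = (if k = j then of_int t else 0)"
    and adef: "\<forall>j. \<alpha> j = (\<Sum>i\<in>{1..r+1}. of_rat (B i j) * e i)"
    using bd unfolding basis_data_def by blast+
  have Q: "Q_lin_indep (r+2) e" by (rule Zbasis_Qind[OF Z])
  have SP: "qspans (r+2) e" unfolding qspans_def using span_all[OF w Q] by blast
  have h0: "h \<noteq> 0"
  proof
    assume "h = 0"
    have "(\<Sum>k<r+2. of_rat (if k = 0 then 1 else 0) * e k) = (\<Sum>k<r+2. if k = 0 then e k else 0)"
      by (rule sum.cong) auto
    also have "\<dots> = e 0" by (simp add: sum.delta)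
    also have "\<dots> = 0" using e0 \<open>h = 0\<close> by simp
    finally have "(if (0::nat) = 0 then 1 else 0 :: rat) = 0" by (rule Qind[OF Q]) simp
    thus False by simp
  qed
  have eS: "e i \<in> S" if "i < r+2" for i using Zbasis_mem[OF Z that] .
  have L: "qlin (Phi r e u h)" by (rule Phi_qlin[OF Q SP])
  have AmPhi: "Amat r e u h k i = Phi r e u h (u k * e (i+1))" if "k \<le> r" "i < r+1" for k i
    unfolding Amat_def using Phi_form[OF Z SP] clos eS that by simp
  show "\<forall>k\<le>r. \<forall>j\<le>r. Phi r e u h (u k * \<alpha> j) = (if k = j then of_int t else 0)"
  proof (intro allI impI)
    fix k j assume k: "k \<le> r" and j: "j \<le> r"
    have X: "u k * \<alpha> j = (\<Sum>i\<in>{1..r+1}. of_rat (B i j) * (u k * e i))"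
      unfolding adef[rule_format] sum_distrib_left by (simp add: mult.left_commute)
    have "Phi r e u h (u k * \<alpha> j) = (\<Sum>i\<in>{1..r+1}. B i j * Phi r e u h (u k * e i))"
      unfolding X by (rule qlin_sum[OF L])
    also have "\<dots> = (\<Sum>i\<in>{1..r+1}. Amat r e u h k (i - 1) * B i j)"
    proof (rule sum.cong[OF refl])
      fix i assume "i \<in> {1..r+1}"
      hence "i - 1 < r + 1" "i - 1 + 1 = i" by auto
      thus "B i j * Phi r e u h (u k * e i) = Amat r e u h k (i - 1) * B i j"
        using AmPhi[OF k, of "i - 1"] by simp
    qed
    also have "\<dots> = (if k = j then of_int t else 0)" using Beq k j by simp
    finally show "Phi r e u h (u k * \<alpha> j) = (if k = j then of_int t else 0)" .
  qed
  define n' where "n' = r + 1"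
  define Am where "Am = mat n' n' (\<lambda>(k,i). Amat r e u h k i)"
  have Amc: "Am \<in> carrier_mat n' n'" by (simp add: Am_def)
  have dA: "det Am \<noteq> 0"
  proof
    assume "det Am = 0"
    then obtain v where v: "v \<in> carrier_vec n'" "v \<noteq> 0\<^sub>v n'" "Am *\<^sub>v v = 0\<^sub>v n'"
      using det_0_iff_vec_prod_zero_field[OF Amc] by blast
    define y where "y = (\<Sum>i<r+1. of_rat (v $ i) * e (i+1))"
    have "Phi r e u h (u k * y) = 0" if k: "k \<le> r" for k
    proof -
      have X: "u k * y = (\<Sum>i<r+1. of_rat (v $ i) * (u k * e (i+1)))"
        unfolding y_def sum_distrib_left by (simp add: mult.left_commute)
      have "Phi r e u h (u k * y) = (\<Sum>i<r+1. v $ i * Phi r e u h (u k * e (i+1)))"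
        unfolding X by (rule qlin_sum[OF L])
      also have "\<dots> = (\<Sum>i<r+1. Am $$ (k,i) * v $ i)"
        by (rule sum.cong[OF refl]) (use k in \<open>auto simp: Am_def n'_def AmPhi\<close>)
      also have "\<dots> = (Am *\<^sub>v v) $ k"
        using k v(1) by (simp add: Am_def n'_def scalar_prod_def atLeast0LessThan)
      also have "\<dots> = 0" using v(3) k by (simp add: n'_def)
      finally show ?thesis .
    qed
    hence "\<forall>k\<le>r. Phi r e u h (u k * (y / h * h)) = 0" using h0 by simp
    then obtain l where l: "y / h = of_rat l" using inj by blast
    hence yl: "y = of_rat l * e 0" using h0 e0 by (simp add: divide_eq_eq)
    define c where "c k = (if k = 0 then - l else v $ (k - 1))" for k
    have "(\<Sum>k<r+2. of_rat (c k) * e k) = of_rat (c 0) * e 0 + (\<Sum>i<r+1. of_rat (c (Suc i)) * e (Suc i))"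
    proof -
      have e2: "r+2 = Suc (r+1)" by simp
      show ?thesis unfolding e2 by (rule sum.lessThan_Suc_shift)
    qed
    also have "\<dots> = - (of_rat l * e 0) + y" unfolding c_def y_def by (simp add: of_rat_minus)
    finally have c0: "(\<Sum>k<r+2. of_rat (c k) * e k) = 0" using yl by simp
    have "v = 0\<^sub>v n'"
    proof (rule eq_vecI)
      fix i assume "i < dim_vec (0\<^sub>v n')" hence i: "i < r+1" by (simp add: n'_def)
      have "c (Suc i) = 0" by (rule Qind[OF Q c0]) (use i in simp)
      thus "v $ i = 0\<^sub>v n' $ i" using i by (simp add: c_def n'_def)
    qed (use v(1) in simp)
    with v(2) show False by simp
  qed
  from ED obtain P Qq :: "nat \<Rightarrow> nat \<Rightarrow> int" where
    dP: "detn n' P \<in> {1,-1}" and dQ: "detn n' Qq \<in> {1,-1}"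
    and PAQ: "\<forall>i<n'. \<forall>j<n'. (\<Sum>k<n'. \<Sum>l<n'. of_int (P i k) * Amat r e u h k l * of_int (Qq l j))
                      = (if i = j then of_int (A i) else 0)"
    and ch: "\<forall>i. Suc i < n' \<longrightarrow> A i dvd A (Suc i)"
    unfolding elem_divisors_def n'_def by blast
  define Pm where "Pm = mat n' n' (\<lambda>(i,j). rat_of_int (P i j))"
  define Qm where "Qm = mat n' n' (\<lambda>(i,j). rat_of_int (Qq i j))"
  define Dm where "Dm = mat n' n' (\<lambda>(i,j). if i = j then rat_of_int (A i) else 0)"
  have Pc: "Pm \<in> carrier_mat n' n'" and Qc: "Qm \<in> carrier_mat n' n'" and Dc: "Dm \<in> carrier_mat n' n'"
    by (simp_all add: Pm_def Qm_def Dm_def)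
  have detconv: "det (mat n' n' (\<lambda>(i,j). rat_of_int (M i j))) = of_int (detn n' M)" for M
  proof -
    have "mat n' n' (\<lambda>(i,j). rat_of_int (M i j)) = map_mat of_int (mat n' n' (\<lambda>(i,j). M i j))"
      by (rule eq_matI) auto
    thus ?thesis unfolding detn_det using of_int_hom.hom_det by metis
  qed
  have detPm: "det Pm \<noteq> 0" using dP unfolding Pm_def detconv by auto
  have detQm: "det Qm \<noteq> 0" using dQ unfolding Qm_def detconv by auto
  have PAQm: "Pm * Am * Qm = Dm"
  proof (rule eq_matI)
    fix i j assume "i < dim_row Dm" "j < dim_col Dm" hence i: "i < n'" and j: "j < n'" by (simp_all add: Dm_def)
    show "(Pm * Am * Qm) $$ (i,j) = Dm $$ (i,j)"
      unfolding mat3_entry[OF Pc Amc Qc i j] using PAQ i j by (simp add: Pm_def Am_def Qm_def Dm_def)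
  qed (simp_all add: Pm_def Dm_def Qm_def)
  have utD: "upper_triangular Dm" unfolding upper_triangular_def by (simp add: Dm_def)
  have "det Dm = prod_list (diag_mat Dm)" by (rule det_upper_triangular[OF utD Dc])
  also have "\<dots> = (\<Prod>i\<in>{0..<n'}. rat_of_int (A i))"
    unfolding diag_mat_def prod_list_upt by (rule prod.cong) (auto simp: Dm_def)
  finally have dD: "det Dm = (\<Prod>i\<in>{0..<n'}. rat_of_int (A i))" .
  have "det Dm = det Pm * det Am * det Qm"
    unfolding PAQm[symmetric] using Pc Amc Qc by (simp add: det_mult[of _ n'])
  hence "det Dm \<noteq> 0" using detPm dA detQm by simp
  hence Ai0: "A i \<noteq> 0" if "i < n'" for i using that unfolding dD by auto
  show t0: "t \<noteq> 0" unfolding tA using Ai0[of r] by (simp add: n'_def)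
  have Adv: "A i dvd t" if "i < n'" for i
    unfolding tA using chain_dvd[OF ch _ , of r i] that by (simp add: n'_def)
  define E where "E = mat n' n' (\<lambda>(i,j). if i = j then rat_of_int (t div A i) else 0)"
  have Ec: "E \<in> carrier_mat n' n'" by (simp add: E_def)
  have DE: "Dm * E = of_int t \<cdot>\<^sub>m 1\<^sub>m n'"
  proof (rule eq_matI)
    fix i j assume "i < dim_row (of_int t \<cdot>\<^sub>m 1\<^sub>m n')" "j < dim_col (of_int t \<cdot>\<^sub>m (1\<^sub>m n' :: rat mat))"
    hence i: "i < n'" and j: "j < n'" by simp_all
    have "(Dm * E) $$ (i,j) = (\<Sum>l\<in>{0..<n'}. Dm $$ (i,l) * E $$ (l,j))"
      using i j Dc Ec by (simp add: scalar_prod_def)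
    also have "\<dots> = (\<Sum>l\<in>{0..<n'}. if l = i then (if i = j then rat_of_int (A i) * rat_of_int (t div A i) else 0) else 0)"
      by (rule sum.cong) (use i j in \<open>auto simp: Dm_def E_def\<close>)
    also have "\<dots> = (if i = j then rat_of_int (A i) * rat_of_int (t div A i) else 0)"
      using i by (simp add: sum.delta)
    also have "\<dots> = (if i = j then rat_of_int t else 0)"
    proof -
      have "A i * (t div A i) = t" using Adv[OF i] by simp
      hence "rat_of_int (A i) * rat_of_int (t div A i) = rat_of_int t" by (metis of_int_mult)
      thus ?thesis by auto
    qed
    finally show "(Dm * E) $$ (i,j) = (of_int t \<cdot>\<^sub>m 1\<^sub>m n') $$ (i,j)" using i j by simp
  qed (use Dc Ec in simp_all)
  define Bm where "Bm = mat n' n' (\<lambda>(i,j). B (i+1) j)"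
  have Bc: "Bm \<in> carrier_mat n' n'" by (simp add: Bm_def)
  have AB: "Am * Bm = of_int t \<cdot>\<^sub>m 1\<^sub>m n'"
  proof (rule eq_matI)
    fix k j assume "k < dim_row (of_int t \<cdot>\<^sub>m 1\<^sub>m n')" "j < dim_col (of_int t \<cdot>\<^sub>m (1\<^sub>m n' :: rat mat))"
    hence k: "k < n'" and j: "j < n'" by simp_all
    have "(Am * Bm) $$ (k,j) = (\<Sum>l\<in>{0..<n'}. Amat r e u h k l * B (l+1) j)"
      using k j Amc Bc by (simp add: scalar_prod_def Am_def Bm_def)
    also have "\<dots> = (\<Sum>i\<in>Suc ` {0..<n'}. Amat r e u h k (i - 1) * B i j)"
      by (subst sum.reindex) auto
    also have "Suc ` {0..<n'} = {1..r+1}"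
      by (simp add: n'_def image_Suc_atLeastLessThan atLeastLessThanSuc_atLeastAtMost)
    also have "(\<Sum>i\<in>{1..r+1}. Amat r e u h k (i - 1) * B i j) = (if k = j then of_int t else 0)"
      using Beq k j by (simp add: n'_def)
    finally show "(Am * Bm) $$ (k,j) = (of_int t \<cdot>\<^sub>m 1\<^sub>m n') $$ (k,j)" using k j by simp
  qed (use Amc Bc in simp_all)
  obtain Pinv where Pi: "Pinv \<in> carrier_mat n' n'" "Pm * Pinv = 1\<^sub>m n'" "Pinv * Pm = 1\<^sub>m n'"
    using mat_inv_ex[OF Pc detPm] by blast
  obtain Ainv where Ai: "Ainv \<in> carrier_mat n' n'" "Am * Ainv = 1\<^sub>m n'" "Ainv * Am = 1\<^sub>m n'"
    using mat_inv_ex[OF Amc dA] by blast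
  define X where "X = Qm * E * Pm"
  have Xc: "X \<in> carrier_mat n' n'" using Qc Ec Pc by (simp add: X_def)
  have s1: "Pm * (Am * Qm * E) = of_int t \<cdot>\<^sub>m 1\<^sub>m n'"
  proof -
    have a1: "Am * Qm * E = Am * (Qm * E)" using Amc Qc Ec by (rule assoc_mult_mat)
    have a2: "Pm * Am * Qm * E = Pm * Am * (Qm * E)"
      by (rule assoc_mult_mat[of "Pm*Am" n' n' Qm n' E n']) (use Pc Amc Qc Ec in auto)
    have a3: "Pm * Am * (Qm * E) = Pm * (Am * (Qm * E))"
      by (rule assoc_mult_mat[of Pm n' n' Am n' "Qm * E" n']) (use Pc Amc Qc Ec in auto)
    have "Pm * (Am * Qm * E) = (Pm * Am * Qm) * E" unfolding a1 a2 a3 ..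
    also have "\<dots> = Dm * E" unfolding PAQm ..
    finally show ?thesis unfolding DE .
  qed
  have s2: "Am * Qm * E = of_int t \<cdot>\<^sub>m Pinv"
  proof -
    have c: "Am * Qm * E \<in> carrier_mat n' n'" using Amc Qc Ec by simp
    have "Am * Qm * E = (Pinv * Pm) * (Am * Qm * E)" unfolding Pi(3) by (rule left_mult_one_mat[OF c, symmetric])
    also have "\<dots> = Pinv * (Pm * (Am * Qm * E))" using Pi(1) Pc c by (rule assoc_mult_mat)
    also have "\<dots> = Pinv * (of_int t \<cdot>\<^sub>m 1\<^sub>m n')" unfolding s1 ..
    also have "\<dots> = of_int t \<cdot>\<^sub>m (Pinv * 1\<^sub>m n')" by (rule mult_smult_distrib[OF Pi(1) one_carrier_mat])
    also have "\<dots> = of_int t \<cdot>\<^sub>m Pinv" unfolding right_mult_one_mat[OF Pi(1)] ..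
    finally show ?thesis .
  qed
  have s3: "Am * X = of_int t \<cdot>\<^sub>m 1\<^sub>m n'"
  proof -
    have b1: "Qm * E * Pm = Qm * (E * Pm)" using Qc Ec Pc by (rule assoc_mult_mat)
    have b2: "Am * Qm * E * Pm = Am * Qm * (E * Pm)"
      by (rule assoc_mult_mat[of "Am*Qm" n' n' E n' Pm n']) (use Amc Qc Ec Pc in auto)
    have b3: "Am * Qm * (E * Pm) = Am * (Qm * (E * Pm))"
      by (rule assoc_mult_mat[of Am n' n' Qm n' "E * Pm" n']) (use Amc Qc Ec Pc in auto)
    have "Am * X = (Am * Qm * E) * Pm" unfolding X_def b1 b2 b3 ..
    also have "\<dots> = of_int t \<cdot>\<^sub>m (Pinv * Pm)" unfolding s2 using Pi(1) Pc by (rule mult_smult_assoc_mat)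
    finally show ?thesis unfolding Pi(3) .
  qed
  have BX: "Bm = X"
  proof -
    have "Bm = (Ainv * Am) * Bm" unfolding Ai(3) by (rule left_mult_one_mat[OF Bc, symmetric])
    also have "\<dots> = Ainv * (Am * Bm)" using Ai(1) Amc Bc by (rule assoc_mult_mat)
    also have "\<dots> = Ainv * (Am * X)" unfolding AB s3 ..
    also have "\<dots> = (Ainv * Am) * X" using Ai(1) Amc Xc by (rule assoc_mult_mat[symmetric])
    finally show ?thesis unfolding Ai(3) left_mult_one_mat[OF Xc] .
  qed
  have XZ: "X $$ (i,j) \<in> \<int>" if "i < n'" "j < n'" for i j
    unfolding X_def mat3_entry[OF Qc Ec Pc that]
    by (intro Ints_sum Ints_mult) (use that in \<open>auto simp: Qm_def E_def Pm_def\<close>)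
  show "\<forall>i\<in>{1..r+1}. \<forall>j\<le>r. B i j \<in> \<int>"
  proof (intro ballI allI impI)
    fix i j assume i: "i \<in> {1..r+1}" and j: "j \<le> r"
    hence i1: "i - 1 < n'" "j < n'" by (auto simp: n'_def)
    have "B i j = Bm $$ (i - 1, j)" using i i1 by (simp add: Bm_def)
    thus "B i j \<in> \<int>" unfolding BX using XZ[OF i1] by simp
  qed
qed

lemma one_OK: "(1::'k::field_char_0) \<in> O_K"
  unfolding O_K_def alg_int_def
  by (intro CollectI exI[of _ "[:-1, 1:]"]) simp

lemma ideal_mult_closed:
  assumes f: "int_ideal f" and z: "z \<in> O_K" and yv: "yv \<in> ideal_mult f J"
  shows "z * yv \<in> ideal_mult f J"
proof -
  have "\<exists>(n::nat) x y. yv = (\<Sum>i<n. x i * y i) \<and> (\<forall>i<n. x i \<in> f \<and> y i \<in> J)"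
    using yv unfolding ideal_mult_def by simp
  then obtain n :: nat and x yy where y: "yv = (\<Sum>i<n. x i * yy i)" and xy: "\<forall>i<n. x i \<in> f \<and> yy i \<in> J"
    by blast
  have 1: "z * yv = (\<Sum>i<n. (z * x i) * yy i)" unfolding y sum_distrib_left by (simp add: mult.assoc)
  have 2: "\<forall>i<n. z * x i \<in> f \<and> yy i \<in> J" using xy f z unfolding int_ideal_def by blast
  have "\<exists>(n::nat) x y. z * yv = (\<Sum>i<n. x i * y i) \<and> (\<forall>i<n. x i \<in> f \<and> y i \<in> J)"
    using 1 2 by (intro exI[of _ n] exI[of _ "\<lambda>i. z * x i"] exI[of _ yy] conjI)
  thus ?thesis unfolding ideal_mult_def by simp
qed

theorem proposition14:
  fixes r :: nat
    and \<sigma> :: "nat \<Rightarrow> 'k::field_char_0 \<Rightarrow> complex"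
    and f b a L :: "'k set"
    and q :: int and N :: nat
    and u :: "nat \<Rightarrow> 'k"
    and h h' :: 'k and m :: int
    and e et :: "nat \<Rightarrow> 'k"
    and A At :: "nat \<Rightarrow> int" and t tt :: int
    and B Bt :: "nat \<Rightarrow> nat \<Rightarrow> rat"
    and \<alpha> \<alpha>t :: "nat \<Rightarrow> 'k"
  assumes degree: "\<exists>w::nat \<Rightarrow> 'k. is_Q_basis (r+2) w"
    and emb: "\<forall>j<r+2. embedding (\<sigma> j)"
    and emb_real: "\<forall>j<r. \<forall>x. \<sigma> j x \<in> \<real>"
    and emb_complex: "\<exists>x. \<sigma> r x \<notin> \<real>"
    and emb_conj: "\<forall>x. \<sigma> (r+1) x = cnj (\<sigma> r x)"
    and emb_distinct: "inj_on \<sigma> {..<r+2}"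
    and emb_all: "\<forall>\<tau>. embedding \<tau> \<longrightarrow> (\<exists>j<r+2. \<tau> = \<sigma> j)"
    and f: "int_ideal f" "f \<noteq> O_K"
    and q: "q > 0" "{n::int. of_int n \<in> f} = {q * k | k. True}"
    and b: "int_ideal b" "coprime_ideals b f"
    and L: "L = ideal_mult f (frac_inv b)"
    and a: "int_ideal a" "coprime_ideals a (ideal_mult f b)"
    and cyc: "cyclic_quot (ideal_mult (frac_inv a) L) L"
    and N: "N = ideal_norm a"
    and units: "u 0 = 1" "\<forall>j\<in>{1..r}. u j \<in> pos_units_mod r \<sigma> f"
    and indep: "Q_lin_indep (r+1) u"
    and adm: "admissible L a q N h"
    and hm: "h = of_int m * h'" "m > 0" "primitive_in L h'"
    and data_h: "basis_data r \<sigma> u L h' e A t B \<alpha>"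
    and data_1: "basis_data r \<sigma> u O_K 1 et At tt Bt \<alpha>t"
  shows "let \<epsilon> = sgn (form_a r e u h' (\<alpha>t 0 * h'));
             l = \<bar>form_a r e u h' (\<alpha>t 0 * h')\<bar> / of_int t
         in \<forall>j\<le>r. \<exists>mj::int. of_rat (\<epsilon> * l) * \<alpha> j = \<alpha>t j * h' + of_int mj * h'"
proof -
  obtain w :: "nat \<Rightarrow> 'k" where w: "is_Q_basis (r+2) w" using degree by blast
  have ZL: "is_Z_basis (r+2) L e" and eh: "e 0 = h'"
    and triL: "\<forall>j\<le>r. (\<forall>k. j < k \<longrightarrow> zcoord (r+2) e (u j * h') k = 0) \<and> zcoord (r+2) e (u j * h') j > 0"
    and adef: "\<forall>j. \<alpha> j = (\<Sum>i\<in>{1..r+1}. of_rat (B i j) * e i)"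
    using data_h unfolding basis_data_def by blast+
  have ZO: "is_Z_basis (r+2) O_K et"
    and triO: "\<forall>j\<le>r. (\<forall>k. j < k \<longrightarrow> zcoord (r+2) et (u j * 1) k = 0) \<and> zcoord (r+2) et (u j * 1) j > 0"
    and atdef: "\<forall>j. \<alpha>t j = (\<Sum>i\<in>{1..r+1}. of_rat (Bt i j) * et i)"
    using data_1 unfolding basis_data_def by blast+
  have hL: "h' \<in> L" using hm(3) unfolding primitive_in_def by blast
  have h0: "h' \<noteq> 0"
  proof
    assume "h' = 0"
    hence "h' = of_int 2 * h'" by simp
    hence "\<bar>2::int\<bar> = 1" using hm(3) hL unfolding primitive_in_def by blast
    thus False by simp
  qed
  have uO: "u k \<in> O_K" if "k \<le> r" for k
  proof (cases "k = 0")
    case True thus ?thesis using units(1) one_OK by simp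
  next
    case False hence "k \<in> {1..r}" using that by simp
    thus ?thesis using units(2) unfolding pos_units_mod_def by blast
  qed
  have clL: "z * y \<in> L" if "z \<in> O_K" "y \<in> L" for z y :: 'k
    using ideal_mult_closed[OF f(1) that(1)] that(2) unfolding L by blast
  have clO: "y1 * y2 \<in> O_K" if "y1 \<in> O_K" "y2 \<in> O_K" for y1 y2 :: 'k
  proof -
    have cl: "\<forall>y\<in>L. (y1 * y2) * y \<in> L" using clL that by (simp add: mult.assoc)
    have "alg_int (y1 * y2)" by (rule det_trick[OF ZL _ _ cl]) (use eh h0 in auto)
    thus ?thesis unfolding O_K_def by simp
  qed
  have closL: "\<forall>k\<le>r. \<forall>y\<in>L. u k * y \<in> L" using clL uO by blast
  have closO: "\<forall>k\<le>r. \<forall>y\<in>O_K. u k * y \<in> O_K" using clO uO by blast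
  have QL: "Q_lin_indep (r+2) e" by (rule Zbasis_Qind[OF ZL])
  have SPL: "qspans (r+2) e" unfolding qspans_def using span_all[OF w QL] by blast
  have QO: "Q_lin_indep (r+2) et" by (rule Zbasis_Qind[OF ZO])
  have SPO: "qspans (r+2) et" unfolding qspans_def using span_all[OF w QO] by blast
  define \<psi> where "\<psi> = Phi r et u 1"
  define \<phi> where "\<phi> = Phi r e u h'"
  have L\<psi>: "qlin \<psi>" unfolding \<psi>_def by (rule Phi_qlin[OF QO SPO])
  have L\<phi>: "qlin \<phi>" unfolding \<phi>_def by (rule Phi_qlin[OF QL SPL])
  have \<psi>u: "\<forall>k\<le>r. \<psi> (u k) = 0"
  proof (intro allI impI)
    fix k assume k: "k \<le> r"
    have "Phi r et u 1 (u k * 1) = 0" by (rule Phi_zero[OF ZO SPO k]) (use closO one_OK k in blast)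
    thus "\<psi> (u k) = 0" unfolding \<psi>_def by simp
  qed
  have \<psi>top: "\<psi> (et (r+1)) = 1" unfolding \<psi>_def by (rule Phi_top[OF ZO SPO triO])
  have \<phi>u: "\<phi> (u k * h') = 0" if k: "k \<le> r" for k
    unfolding \<phi>_def by (rule Phi_zero[OF ZL SPL k]) (use closL hL k in blast)
  have \<phi>top: "\<phi> (e (r+1)) = 1" unfolding \<phi>_def by (rule Phi_top[OF ZL SPL triL])
  have stab': "\<exists>l. x = of_rat l" if "\<forall>k\<le>r. \<psi> (u k * x) = 0" for x
    by (rule stab[OF w indep L\<psi> \<psi>u \<psi>top that])
  define F where "F y = \<phi> (y * h')" for y
  have LF: "qlin F"
  proof -
    have "F (x + y) = F x + F y" for x y
      unfolding F_def distrib_right by (rule qlin_add[OF L\<phi>])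
    moreover have "F (of_rat c * x) = c * F x" for c x
      unfolding F_def mult.assoc by (rule qlin_scale[OF L\<phi>])
    ultimately show ?thesis unfolding qlin_def by blast
  qed
  have Fu: "\<forall>k\<le>r. F (u k) = 0" unfolding F_def using \<phi>u by blast
  define c where "c = F (et (r+1))"
  have Fpsi: "F y = \<psi> y * c" for y
    unfolding c_def by (rule prop_func[OF w indep L\<psi> \<psi>u \<psi>top LF Fu])
  have c0: "c \<noteq> 0"
  proof
    assume "c = 0"
    have "F (e (r+1) / h') = \<phi> (e (r+1))" unfolding F_def using h0 by simp
    hence "\<psi> (e (r+1) / h') * c = 1" using \<phi>top Fpsi by simp
    with \<open>c = 0\<close> show False by simp
  qed
  have injL: "\<exists>l. x = of_rat l" if "\<forall>k\<le>r. Phi r e u h' (u k * (x * h')) = 0" for x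
  proof (rule stab')
    show "\<forall>k\<le>r. \<psi> (u k * x) = 0"
    proof (intro allI impI)
      fix k assume "k \<le> r"
      hence "F (u k * x) = 0" using that unfolding F_def \<phi>_def by (simp add: mult.assoc)
      thus "\<psi> (u k * x) = 0" using Fpsi c0 by simp
    qed
  qed
  have injO: "\<exists>l. x = of_rat l" if "\<forall>k\<le>r. Phi r et u 1 (u k * (x * 1)) = 0" for x
    using stab' that unfolding \<psi>_def by simp
  note sL = side[OF w data_h closL injL]
  note sO = side[OF w data_1 closO injO]
  have t0: "t \<noteq> 0" by (rule sL(1))
  have \<phi>\<alpha>: "\<phi> (u k * \<alpha> j) = (if k = j then of_int t else 0)" if "k \<le> r" "j \<le> r" for k j
    using sL(2) that unfolding \<phi>_def by blast
  have \<psi>\<alpha>: "\<psi> (u k * \<alpha>t j) = (if k = j then of_int tt else 0)" if "k \<le> r" "j \<le> r" for k j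
    using sO(2) that unfolding \<psi>_def by blast
  have atO: "\<alpha>t j \<in> O_K" if "j \<le> r" for j
  proof -
    define d where "d k = (if k \<in> {1..r+1} then \<lfloor>Bt k j\<rfloor> else 0)" for k
    have "(\<Sum>k<r+2. of_int (d k) * et k) = (\<Sum>k<r+2. if k \<in> {1..r+1} then of_rat (Bt k j) * et k else 0)"
    proof (rule sum.cong[OF refl])
      fix k assume "k \<in> {..<r+2}"
      show "of_int (d k) * et k = (if k \<in> {1..r+1} then of_rat (Bt k j) * et k else 0)"
      proof (cases "k \<in> {1..r+1}")
        case True
        hence "Bt k j \<in> \<int>" using sO(3) that by blast
        hence "of_int \<lfloor>Bt k j\<rfloor> = Bt k j" by (elim Ints_cases) simp
        hence "(of_int \<lfloor>Bt k j\<rfloor> :: 'k) = of_rat (Bt k j)" by (metis of_rat_of_int_eq)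
        thus ?thesis using True by (simp add: d_def)
      next
        case False
        have "d k = 0" unfolding d_def using False by (rule if_not_P)
        thus ?thesis unfolding if_not_P[OF False] by simp
      qed
    qed
    also have "\<dots> = (\<Sum>k\<in>{..<r+2} \<inter> {1..r+1}. of_rat (Bt k j) * et k)" by (rule sum.inter_restrict[symmetric]) simp
    also have "{..<r+2} \<inter> {1..r+1} = {1..r+1}" by auto
    finally have "\<alpha>t j = (\<Sum>k<r+2. of_int (d k) * et k)" using atdef by simp
    thus ?thesis by (rule Zmem[OF ZO])
  qed
  have formeq: "form_a r e u h' (\<alpha>t 0 * h') = of_int tt * c"
  proof -
    have "form_a r e u h' (\<alpha>t 0 * h') = \<phi> (\<alpha>t 0 * h')"
      unfolding \<phi>_def by (rule Phi_form[OF ZL SPL clL[OF atO hL]]) simp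
    also have "\<dots> = \<psi> (\<alpha>t 0) * c" using Fpsi unfolding F_def by simp
    also have "\<psi> (\<alpha>t 0) = of_int tt" using \<psi>\<alpha>[of 0 0] units(1) by simp
    finally show ?thesis .
  qed
  define s where "s = of_int tt * c / of_int t"
  have es: "sgn (form_a r e u h' (\<alpha>t 0 * h')) * (\<bar>form_a r e u h' (\<alpha>t 0 * h')\<bar> / of_int t) = s"
    unfolding formeq s_def by (simp add: sgn_mult_abs)
  have main: "\<exists>mj::int. of_rat s * \<alpha> j = \<alpha>t j * h' + of_int mj * h'" if j: "j \<le> r" for j
  proof -
    define D where "D = of_rat s * \<alpha> j - \<alpha>t j * h'"
    have ajL: "\<alpha>t j * h' \<in> L" by (rule clL[OF atO[OF j] hL])
    have Dk: "\<phi> (u k * D) = 0" if k: "k \<le> r" for k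
    proof -
      have X: "u k * D = of_rat s * (u k * \<alpha> j) - (u k * \<alpha>t j) * h'" unfolding D_def by (simp add: algebra_simps)
      have "\<phi> (u k * D) = s * \<phi> (u k * \<alpha> j) - F (u k * \<alpha>t j)"
        unfolding X F_def qlin_diff[OF L\<phi>] qlin_scale[OF L\<phi>] ..
      also have "\<dots> = s * (if k = j then of_int t else 0) - (if k = j then of_int tt else 0) * c"
        unfolding \<phi>\<alpha>[OF k j] Fpsi \<psi>\<alpha>[OF k j] ..
      also have "\<dots> = 0" using t0 by (simp add: s_def)
      finally show ?thesis .
    qed
    have "\<forall>k\<le>r. Phi r e u h' (u k * (D / h' * h')) = 0" using Dk h0 unfolding \<phi>_def by simp
    then obtain lam where lam: "D / h' = of_rat lam" using injL by blast
    hence Dl: "D = of_rat lam * e 0" using h0 eh by (simp add: divide_eq_eq)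
    define nn where "nn = zcoord (r+2) e (\<alpha>t j * h')"
    have nn: "\<alpha>t j * h' = (\<Sum>k<r+2. of_int (nn k) * e k)" unfolding nn_def by (rule zcoord_prop(1)[OF ZL ajL])
    define cc where "cc k = (if k \<in> {1..r+1} then s * B k j else 0) - of_int (nn k) - (if k = 0 then lam else 0)" for k
    have "(\<Sum>k<r+2. of_rat (cc k) * e k) = (\<Sum>k<r+2. (if k \<in> {1..r+1} then of_rat s * (of_rat (B k j) * e k) else 0)
        - of_int (nn k) * e k - (if k = 0 then of_rat lam * e k else 0))"
      by (rule sum.cong) (auto simp: cc_def of_rat_diff of_rat_mult left_diff_distrib)
    also have "\<dots> = (\<Sum>k<r+2. if k \<in> {1..r+1} then of_rat s * (of_rat (B k j) * e k) else 0)
        - (\<Sum>k<r+2. of_int (nn k) * e k) - (\<Sum>k<r+2. if k = 0 then of_rat lam * e k else 0)"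
      by (simp only: sum_subtractf)
    also have "(\<Sum>k<r+2. if k \<in> {1..r+1} then of_rat s * (of_rat (B k j) * e k) else 0) = of_rat s * \<alpha> j"
    proof -
      have "(\<Sum>k<r+2. if k \<in> {1..r+1} then of_rat s * (of_rat (B k j) * e k) else 0)
          = (\<Sum>k\<in>{..<r+2} \<inter> {1..r+1}. of_rat s * (of_rat (B k j) * e k))"
        by (rule sum.inter_restrict[symmetric]) simp
      also have "{..<r+2} \<inter> {1..r+1} = {1..r+1}" by auto
      finally show ?thesis unfolding adef[rule_format] sum_distrib_left .
    qed
    also have "(\<Sum>k<r+2. if k = 0 then of_rat lam * e k else 0) = of_rat lam * e 0"
      by (simp add: sum.delta)
    finally have "(\<Sum>k<r+2. of_rat (cc k) * e k) = D - D" unfolding nn[symmetric] Dl[symmetric] D_def .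
    hence "(\<Sum>k<r+2. of_rat (cc k) * e k) = 0" by simp
    hence "cc 0 = 0" by (rule Qind[OF QL]) simp
    hence lam': "lam = of_int (- nn 0)" by (simp add: cc_def)
    have "of_rat s * \<alpha> j = \<alpha>t j * h' + D" unfolding D_def by simp
    also have "D = of_int (- nn 0) * h'" unfolding Dl lam' eh by (simp add: of_rat_minus)
    finally show ?thesis by blast
  qed
  show ?thesis unfolding Let_def es using main by blast
qed

end
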